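(* Let $(X,D)$ be an $\mathcal{F}$-metric space with respect to $(f,\alpha)\in\mathcal{F}\times[0,\infty)$. Then for every $a\in X$ and every $k>0$ there exists $r>0$ such that for all $b\in X$ with $D(a,b)\ge k$ and all $c\in X$, one has $D(a,c)+D(b,c)\ge r$.
   Context: $\mathcal{F}$ denotes the class of functions $f:(0,\infty)\to\mathbb{R}$ such that ($\mathcal{F}_1$) $f$ is non-decreasing, and ($\mathcal{F}_2$) for every sequence $(t_n)\subseteq(0,\infty)$, $\lim_n t_n=0$ iff $\lim_n f(t_n)=-\infty$. An $\mathcal{F}$-metric on a non-empty set $X$ is a map $D:X\times X\to[0,\infty)$ for which there exists $(f,\alpha)\in\mathcal{F}\times[0,\infty)$ such that: (D1) $D(x,y)=0$ iff $x=y$; (D2) $D(x,y)=D(y,x)$ for all $x,y$; (D3) for all $(x,y)\in X\times X$, every integer $N\ge2$ and every $u_1,\dots,u_N\in X$ with $u_1=x$, $u_N=y$: if $D(x,y)>0$ then $f(D(x,y))\le f\big(\sum_{i=1}^{N-1}D(u_i,u_{i+1})\big)+\alpha$. *)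

theory Defs
  imports Main "HOL-Analysis.Analysis"
begin

text \<open>The class F: functions on (0,infinity), represented as real => real,
  only their values on positive reals matter.\<close>
definition F_class :: "(real \<Rightarrow> real) \<Rightarrow> bool" where
  "F_class f \<longleftrightarrow>
     (\<forall>s t. 0 < s \<longrightarrow> s \<le> t \<longrightarrow> f s \<le> f t) \<and>
     (\<forall>t :: nat \<Rightarrow> real. (\<forall>n. 0 < t n) \<longrightarrow>
        (t \<longlonglongrightarrow> 0 \<longleftrightarrow> filterlim (\<lambda>n. f (t n)) at_bot sequentially))"

definition F_metric_wrt ::
  "'a set \<Rightarrow> ('a \<Rightarrow> 'a \<Rightarrow> real) \<Rightarrow> (real \<Rightarrow> real) \<Rightarrow> real \<Rightarrow> bool" where
  "F_metric_wrt X D f \<alpha> \<longleftrightarrow>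
     X \<noteq> {} \<and> F_class f \<and> 0 \<le> \<alpha> \<and>
     (\<forall>x\<in>X. \<forall>y\<in>X. 0 \<le> D x y) \<and>
     (\<forall>x\<in>X. \<forall>y\<in>X. D x y = 0 \<longleftrightarrow> x = y) \<and>
     (\<forall>x\<in>X. \<forall>y\<in>X. D x y = D y x) \<and>
     (\<forall>x\<in>X. \<forall>y\<in>X. \<forall>N::nat. \<forall>u::nat \<Rightarrow> 'a.
        2 \<le> N \<longrightarrow> (\<forall>i\<in>{1..N}. u i \<in> X) \<longrightarrow> u 1 = x \<longrightarrow> u N = y \<longrightarrow>
        0 < D x y \<longrightarrow> f (D x y) \<le> f (\<Sum>i=1..N-1. D (u i) (u (Suc i))) + \<alpha>)"

end

theory Submission
  imports Defs
begin

lemma F_small: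
  assumes "F_class f"
  shows "\<exists>r>0. \<forall>t. 0 < t \<and> t < r \<longrightarrow> f t < M"
proof (rule ccontr)
  assume H: "\<not> ?thesis"
  have "\<forall>n::nat. \<exists>t. 0 < t \<and> t < 1 / (real n + 1) \<and> M \<le> f t"
  proof
    fix n :: nat
    have "(1::real) / (real n + 1) > 0" by simp
    with H show "\<exists>t. 0 < t \<and> t < 1 / (real n + 1) \<and> M \<le> f t"
      by (meson not_less)
  qed
  then obtain t where t: "\<And>n. 0 < t n \<and> t n < 1 / (real n + 1) \<and> M \<le> f (t n)"
    by metis
  have "t \<longlonglongrightarrow> 0"
  proof (rule real_tendsto_sandwich[of "\<lambda>_. 0" _ _ "\<lambda>n. 1 / (real n + 1)"])
    show "\<forall>\<^sub>F n in sequentially. 0 \<le> t n" using t by (simp add: less_imp_le)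
    show "\<forall>\<^sub>F n in sequentially. t n \<le> 1 / (real n + 1)" using t by (simp add: less_imp_le)
    show "(\<lambda>n. 0) \<longlonglongrightarrow> (0::real)" by simp
    show "(\<lambda>n. 1 / (real n + 1)) \<longlonglongrightarrow> 0" using LIMSEQ_inverse_real_of_nat by (simp add: inverse_eq_divide add.commute)
  qed
  then have "filterlim (\<lambda>n. f (t n)) at_bot sequentially"
    using assms t unfolding F_class_def by blast
  then have "\<forall>\<^sub>F n in sequentially. f (t n) < M"
    by (simp add: filterlim_at_bot_dense)
  then obtain n where "f (t n) < M" by (meson eventually_sequentially order_refl)
  with t show False by (meson not_less)
qed

theorem mainTheorem5:
  fixes X :: "'a set" and D :: "'a \<Rightarrow> 'a \<Rightarrow> real" and f :: "real \<Rightarrow> real" and \<alpha> :: real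
  assumes "F_metric_wrt X D f \<alpha>"
  shows "\<forall>a\<in>X. \<forall>k>0. \<exists>r>0. \<forall>b\<in>X. D a b \<ge> k \<longrightarrow> (\<forall>c\<in>X. D a c + D b c \<ge> r)"
proof (intro ballI allI impI)
  fix a k assume a: "a \<in> X" and k: "(0::real) < k"
  note A = assms[unfolded F_metric_wrt_def]
  have Fc: "F_class f" using A by blast
  then have mono: "\<And>s t. 0 < s \<Longrightarrow> s \<le> t \<Longrightarrow> f s \<le> f t" unfolding F_class_def by blast
  obtain r where r: "r > 0" "\<And>t. 0 < t \<Longrightarrow> t < r \<Longrightarrow> f t < f k - \<alpha>"
    using F_small[OF Fc, of "f k - \<alpha>"] by blast
  show "\<exists>r>0. \<forall>b\<in>X. D a b \<ge> k \<longrightarrow> (\<forall>c\<in>X. D a c + D b c \<ge> r)"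
  proof (intro exI[of _ r] conjI ballI impI r(1))
    fix b c assume b: "b \<in> X" and kb: "k \<le> D a b" and c: "c \<in> X"
    show "r \<le> D a c + D b c"
    proof (rule ccontr)
      assume "\<not> r \<le> D a c + D b c"
      hence lt: "D a c + D b c < r" by simp
      have nn: "0 \<le> D a c" "0 \<le> D b c" using A a b c by auto
      have pos: "0 < D a b" using k kb by linarith
      define u where "u = (\<lambda>i::nat. if i = 1 then a else if i = 2 then c else b)"
      have uX: "\<forall>i\<in>{1..3}. u i \<in> X" using a b c by (simp add: u_def)
      have "f (D a b) \<le> f (\<Sum>i=1..3-1. D (u i) (u (Suc i))) + \<alpha>"
      proof -
        have T: "\<forall>x\<in>X. \<forall>y\<in>X. \<forall>N::nat. \<forall>u::nat \<Rightarrow> 'a.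
          2 \<le> N \<longrightarrow> (\<forall>i\<in>{1..N}. u i \<in> X) \<longrightarrow> u 1 = x \<longrightarrow> u N = y \<longrightarrow>
          0 < D x y \<longrightarrow> f (D x y) \<le> f (\<Sum>i=1..N-1. D (u i) (u (Suc i))) + \<alpha>"
          using A by blast
        have "u 1 = a" "u 3 = b" by (simp_all add: u_def)
        moreover have "(2::nat) \<le> 3" by simp
        ultimately show ?thesis proof -
          have "\<forall>N::nat. \<forall>u::nat \<Rightarrow> 'a.
          2 \<le> N \<longrightarrow> (\<forall>i\<in>{1..N}. u i \<in> X) \<longrightarrow> u 1 = a \<longrightarrow> u N = b \<longrightarrow>
          0 < D a b \<longrightarrow> f (D a b) \<le> f (\<Sum>i=1..N-1. D (u i) (u (Suc i))) + \<alpha>"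
            using T a b by blast
          then have "2 \<le> (3::nat) \<longrightarrow> (\<forall>i\<in>{1..3}. u i \<in> X) \<longrightarrow> u 1 = a \<longrightarrow> u 3 = b \<longrightarrow>
          0 < D a b \<longrightarrow> f (D a b) \<le> f (\<Sum>i=1..3-1. D (u i) (u (Suc i))) + \<alpha>"
            by (erule_tac x=3 in allE, erule_tac x=u in allE)
          then show ?thesis using uX pos \<open>u 1 = a\<close> \<open>u 3 = b\<close> by simp
        qed
      qed
      moreover have "(\<Sum>i=1..3-1. D (u i) (u (Suc i))) = D a c + D b c"
        using A b c by (simp add: u_def numeral_3_eq_3 numeral_2_eq_2)
      ultimately have ineq: "f (D a b) \<le> f (D a c + D b c) + \<alpha>" by simp
      show False
      proof (cases "D a c + D b c = 0")
        case True
        hence "D a c = 0" "D b c = 0" using nn by linarith+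
        hence "a = c" "b = c" using A a b c by blast+
        hence "D a b = 0" using A a by blast
        with pos show False by simp
      next
        case False
        hence "0 < D a c + D b c" using nn by linarith
        hence "f (D a c + D b c) < f k - \<alpha>" using r lt by blast
        moreover have "f k \<le> f (D a b)" using mono k kb by blast
        ultimately show False using ineq by linarith
      qed
    qed
  qed
qed

end
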